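(* Let $r\ge 2$ and let $G$ be a graph on $n$ vertices. If $e(G)\ge e(T_r(n))$, then $\lambda(G)\ge \lambda(T_r(n))$. Moreover, if $e(G)\ge e(T_r(n))$ and $\lambda(G)=\lambda(T_r(n))$, then $G\in\mathcal{F}_r(n)$. Conversely, every $G\in\mathcal{F}_r(n)$ satisfies $e(G)=e(T_r(n))$ and $\lambda(G)=\lambda(T_r(n))$.
   Context: All graphs are finite and simple; $e(G)$ is the number of edges and $\lambda(G)$ the spectral radius of the adjacency matrix. $T_r(n)$ is the complete $r$-partite graph on $n$ vertices with part sizes differing by at most one. The family $\mathcal{F}_r(n)$: write $n=ra+b$ with $0\le b<r$ and $a=\lfloor n/r\rfloor$. If $b=0$, $\mathcal{F}_r(n)$ is the set of all $(r-1)a$-regular graphs on $n$ vertices. If $1\le b<r$, $\mathcal{F}_r(n)$ is the set of all graphs $G$ on $n$ vertices having a partition $V(G)=X\sqcup Y$ with $|X|=b(a+1)$, $|Y|=(r-b)a$, such that every vertex of $X$ is adjacent to every vertex of $Y$, $G[X]$ is $(b-1)(a+1)$-regular, and $G[Y]$ is $(r-b-1)a$-regular. *)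

theory Defs
  imports "Jordan_Normal_Form.Spectral_Radius"
begin

text \<open>A finite simple graph on the vertex set {0..<n} is given by an adjacency
  relation E on nat which is irreflexive and symmetric on {0..<n}
  (values of E outside {0..<n} are irrelevant).\<close>

definition simple_graph :: "nat \<Rightarrow> (nat \<Rightarrow> nat \<Rightarrow> bool) \<Rightarrow> bool" where
  "simple_graph n E \<longleftrightarrow> (\<forall>i<n. \<not> E i i) \<and> (\<forall>i<n. \<forall>j<n. E i j \<longrightarrow> E j i)"

definition num_edges :: "nat \<Rightarrow> (nat \<Rightarrow> nat \<Rightarrow> bool) \<Rightarrow> nat" where
  "num_edges n E = card {(i, j). i < j \<and> j < n \<and> E i j}"

definition adj_mat :: "nat \<Rightarrow> (nat \<Rightarrow> nat \<Rightarrow> bool) \<Rightarrow> complex mat" where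
  "adj_mat n E = mat n n (\<lambda>(i, j). if E i j then 1 else 0)"

definition graph_spectral_radius :: "nat \<Rightarrow> (nat \<Rightarrow> nat \<Rightarrow> bool) \<Rightarrow> real" where
  "graph_spectral_radius n E = spectral_radius (adj_mat n E)"

text \<open>Turan graph T_r(n): vertex i lies in part (i mod r); two vertices are adjacent
  iff they lie in different parts. Part sizes differ by at most one.\<close>
definition turan :: "nat \<Rightarrow> nat \<Rightarrow> nat \<Rightarrow> bool" where
  "turan r i j \<longleftrightarrow> i mod r \<noteq> j mod r"

definition induced_regular :: "(nat \<Rightarrow> nat \<Rightarrow> bool) \<Rightarrow> nat set \<Rightarrow> nat \<Rightarrow> bool" where
  "induced_regular E S d \<longleftrightarrow> (\<forall>v\<in>S. card {u \<in> S. E v u} = d)"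

definition family_F :: "nat \<Rightarrow> nat \<Rightarrow> (nat \<Rightarrow> nat \<Rightarrow> bool) \<Rightarrow> bool" where
  "family_F r n E \<longleftrightarrow> simple_graph n E \<and>
     (let a = n div r; b = n mod r in
      if b = 0 then induced_regular E {0..<n} ((r - 1) * a)
      else (\<exists>X Y. X \<inter> Y = {} \<and> X \<union> Y = {0..<n} \<and>
                  card X = b * (a + 1) \<and> card Y = (r - b) * a \<and>
                  (\<forall>x\<in>X. \<forall>y\<in>Y. E x y) \<and>
                  induced_regular E X ((b - 1) * (a + 1)) \<and>
                  induced_regular E Y ((r - b - 1) * a)))"

end

theory Submission
  imports Defs
begin



lemma cs_sum:
  fixes a b :: "nat \<Rightarrow> real"
  shows "(\<Sum>i\<in>I. a i * b i)^2 \<le> (\<Sum>i\<in>I. (a i)^2) * (\<Sum>i\<in>I. (b i)^2)"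
proof (cases "(\<Sum>i\<in>I. (a i)^2) > 0")
  case False
  have "(\<Sum>i\<in>I. (a i)^2) \<ge> 0" by (simp add: sum_nonneg)
  with False have Q0: "(\<Sum>i\<in>I. (a i)^2) = 0" by simp
  show ?thesis
  proof (cases "finite I")
    case True
    with Q0 have "\<forall>i\<in>I. (a i)^2 = 0" using sum_nonneg_eq_0_iff[of I "\<lambda>i. (a i)^2"] by simp
    hence "\<forall>i\<in>I. a i * b i = 0" by simp
    hence "(\<Sum>i\<in>I. a i * b i) = 0" by simp
    then show ?thesis using Q0 by simp
  next
    case False then show ?thesis by simp
  qed
next
  case True
  define Q where "Q = (\<Sum>i\<in>I. (a i)^2)"
  define S where "S = (\<Sum>i\<in>I. a i * b i)"
  define T where "T = (\<Sum>i\<in>I. (b i)^2)"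
  have "0 \<le> (\<Sum>i\<in>I. (b i * Q - a i * S)^2)" by (simp add: sum_nonneg)
  also have "\<dots> = (\<Sum>i\<in>I. (b i)^2 * Q^2 - 2 * Q * S * (a i * b i) + S^2 * (a i)^2)"
    by (rule sum.cong) (auto simp: power2_eq_square algebra_simps)
  also have "\<dots> = T * Q^2 - 2 * Q * S * S + S^2 * Q"
    by (simp add: sum.distrib sum_subtractf sum_distrib_left sum_distrib_right T_def S_def Q_def)
  also have "\<dots> = Q * (Q * T - S^2)" by (simp add: power2_eq_square algebra_simps)
  finally have "0 \<le> Q * (Q * T - S^2)" .
  with True have "0 \<le> Q * T - S^2" unfolding Q_def by (simp add: zero_le_mult_iff)
  then show ?thesis unfolding Q_def S_def T_def by simp
qed

lemma pow_mat_comm: fixes A :: "real mat" assumes A: "A \<in> carrier_mat n n" shows "A * A ^\<^sub>m k = A ^\<^sub>m k * A"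
proof (induct k)
  case 0 then show ?case using A by simp
next
  case (Suc k)
  have "A * A ^\<^sub>m Suc k = (A * A ^\<^sub>m k) * A" using assoc_mult_mat[OF A pow_carrier_mat[OF A] A, of k] by simp
  also have "\<dots> = A ^\<^sub>m Suc k * A" using Suc by simp
  finally show ?case .
qed

lemma pow_mat_add: fixes A :: "real mat" assumes A: "A \<in> carrier_mat n n" shows "A ^\<^sub>m (k + l) = A ^\<^sub>m k * A ^\<^sub>m l"
proof (induct l)
  case 0 then show ?case using A by simp
next
  case (Suc l)
  have "A ^\<^sub>m (k + Suc l) = (A ^\<^sub>m k * A ^\<^sub>m l) * A" using Suc by simp
  also have "\<dots> = A ^\<^sub>m k * A ^\<^sub>m Suc l" using assoc_mult_mat[OF pow_carrier_mat[OF A] pow_carrier_mat[OF A] A, of k l] by simp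
  finally show ?case .
qed

lemma pow_mat_transpose: fixes A :: "real mat" assumes A: "A \<in> carrier_mat n n" and sym: "transpose_mat A = A"
  shows "transpose_mat (A ^\<^sub>m k) = A ^\<^sub>m k"
proof (induct k)
  case 0 then show ?case using A by simp
next
  case (Suc k)
  have "transpose_mat (A ^\<^sub>m Suc k) = transpose_mat A * transpose_mat (A ^\<^sub>m k)"
    using transpose_mult[OF pow_carrier_mat[OF A] A, of k] by simp
  also have "\<dots> = A * A ^\<^sub>m k" using Suc sym by simp
  also have "\<dots> = A ^\<^sub>m Suc k" using pow_mat_comm[OF A] by simp
  finally show ?case .
qed

lemma mult_mat_entry: assumes "A \<in> carrier_mat n n" "B \<in> carrier_mat n n" "i < n" "j < n"
  shows "(A * B) $$ (i,j) = (\<Sum>l<n. A $$ (i,l) * B $$ (l,j))"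
  using assms by (simp add: scalar_prod_def atLeast0LessThan)

definition qf :: "nat \<Rightarrow> real mat \<Rightarrow> (nat \<Rightarrow> real) \<Rightarrow> real" where
  "qf n P x = (\<Sum>i<n. \<Sum>j<n. x i * P $$ (i,j) * x j)"

lemma qf_square: assumes P: "P \<in> carrier_mat n n"
  and sym: "\<And>i j. i < n \<Longrightarrow> j < n \<Longrightarrow> P $$ (i,j) = P $$ (j,i)"
  shows "(qf n P x)^2 \<le> (\<Sum>i<n. (x i)^2) * qf n (P * P) x"
proof -
  define y where "y l = (\<Sum>j<n. P $$ (l,j) * x j)" for l
  have 1: "qf n P x = (\<Sum>i<n. x i * y i)"
    unfolding qf_def y_def by (simp add: sum_distrib_left mult.assoc)
  have "qf n (P * P) x = (\<Sum>i<n. \<Sum>j<n. \<Sum>l<n. x i * (P $$ (i,l) * P $$ (l,j)) * x j)"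
    unfolding qf_def using P
    by (intro sum.cong refl) (simp only: mult_mat_entry[OF P P] lessThan_iff sum_distrib_left sum_distrib_right)
  also have "\<dots> = (\<Sum>i<n. \<Sum>l<n. \<Sum>j<n. x i * (P $$ (i,l) * P $$ (l,j)) * x j)"
    by (rule sum.cong[OF refl], rule sum.swap)
  also have "\<dots> = (\<Sum>l<n. \<Sum>i<n. \<Sum>j<n. x i * (P $$ (i,l) * P $$ (l,j)) * x j)"
    by (rule sum.swap)
  also have "\<dots> = (\<Sum>l<n. \<Sum>i<n. \<Sum>j<n. (P $$ (l,i) * x i) * (P $$ (l,j) * x j))"
    apply (intro sum.cong refl)
    subgoal for l i j using sym[of i l] by (simp add: mult_ac)
    done
  also have "\<dots> = (\<Sum>l<n. (y l)^2)"
    unfolding y_def power2_eq_square by (simp add: sum_product)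
  finally have 2: "qf n (P * P) x = (\<Sum>l<n. (y l)^2)" .
  show ?thesis unfolding 1 2 by (rule cs_sum)
qed

lemma qf_bound: assumes "\<And>i j. i < n \<Longrightarrow> j < n \<Longrightarrow> \<bar>P $$ (i,j)\<bar> \<le> c"
  shows "qf n P x \<le> c * (\<Sum>i<n. \<bar>x i\<bar>)^2"
proof -
  have "qf n P x \<le> (\<Sum>i<n. \<Sum>j<n. \<bar>x i\<bar> * c * \<bar>x j\<bar>)"
    unfolding qf_def
  proof (intro sum_mono)
    fix i j assume "i \<in> {..<n}" "j \<in> {..<n}"
    hence "\<bar>P $$ (i,j)\<bar> \<le> c" using assms by auto
    hence "\<bar>x i\<bar> * \<bar>P $$ (i,j)\<bar> * \<bar>x j\<bar> \<le> \<bar>x i\<bar> * c * \<bar>x j\<bar>"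
      by (intro mult_right_mono mult_left_mono) auto
    moreover have "x i * P $$ (i,j) * x j \<le> \<bar>x i\<bar> * \<bar>P $$ (i,j)\<bar> * \<bar>x j\<bar>"
      by (metis abs_ge_self abs_mult)
    ultimately show "x i * P $$ (i,j) * x j \<le> \<bar>x i\<bar> * c * \<bar>x j\<bar>" by linarith
  qed
  also have "\<dots> = c * (\<Sum>i<n. \<bar>x i\<bar>)^2"
    by (simp add: power2_eq_square sum_product sum_distrib_left mult_ac)
  finally show ?thesis .
qed

lemma rayleigh:
  fixes M :: "real mat"
  assumes M: "M \<in> carrier_mat n n" and sym: "transpose_mat M = M"
    and Qpos: "(\<Sum>i<n. (x i)^2) > 0"
  shows "qf n M x \<le> spectral_radius (map_mat complex_of_real M) * (\<Sum>i<n. (x i)^2)"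
proof (rule ccontr)
  define Mc where "Mc = map_mat complex_of_real M"
  define \<rho> where "\<rho> = spectral_radius Mc"
  define Q where "Q = (\<Sum>i<n. (x i)^2)"
  assume "\<not> ?thesis"
  hence gt: "qf n M x > \<rho> * Q" unfolding \<rho>_def Mc_def Q_def by simp
  have n: "n > 0" using Qpos by (cases n) auto
  have Q: "Q > 0" using Qpos unfolding Q_def .
  have Mc: "Mc \<in> carrier_mat n n" using M unfolding Mc_def by simp
  have \<rho>0: "\<rho> \<ge> 0" using spectral_radius_mem_max(1)[OF Mc n] unfolding \<rho>_def by auto
  define R where "R = qf n M x / Q"
  have qR: "qf n M x = R * Q" unfolding R_def using Q by simp
  have R: "R > \<rho>" using gt Q unfolding R_def by (simp add: pos_less_divide_eq)
  define R' where "R' = (R + \<rho>) / 2"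
  have R'1: "R' > 0" "\<rho> < R'" "R' < R" using R \<rho>0 unfolding R'_def by auto
  define B where "B = (1 / R') \<cdot>\<^sub>m M"
  have B: "B \<in> carrier_mat n n" using M unfolding B_def by simp
  define Bc where "Bc = map_mat complex_of_real B"
  have Bc: "Bc \<in> carrier_mat n n" using B unfolding Bc_def by simp
  have McBc: "Mc = complex_of_real R' \<cdot>\<^sub>m Bc"
    by (rule eq_matI) (use M R'1 in \<open>auto simp: Mc_def Bc_def B_def\<close>)
  have sr1: "spectral_radius Bc < 1"
  proof -
    from spectral_radius_mem_max(1)[OF Bc n] obtain z where z: "z \<in> spectrum Bc" "spectral_radius Bc = norm z"
      by auto
    then obtain v where ev: "eigenvector Bc v z" unfolding spectrum_def eigenvalue_def by auto
    hence v: "v \<in> carrier_vec n" "v \<noteq> 0\<^sub>v n" "Bc *\<^sub>v v = z \<cdot>\<^sub>v v" unfolding eigenvector_def using Bc by auto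
    have "Mc *\<^sub>v v = (complex_of_real R' * z) \<cdot>\<^sub>v v"
    proof (rule eq_vecI)
      fix i assume i: "i < dim_vec ((complex_of_real R' * z) \<cdot>\<^sub>v v)"
      hence i': "i < n" using v by simp
      have "(Mc *\<^sub>v v) $ i = complex_of_real R' * ((Bc *\<^sub>v v) $ i)"
        using i' Bc v(1) unfolding McBc by (simp add: scalar_prod_def sum_distrib_left mult.assoc)
      also have "\<dots> = (complex_of_real R' * z) * v $ i" using v i' by simp
      finally show "(Mc *\<^sub>v v) $ i = ((complex_of_real R' * z) \<cdot>\<^sub>v v) $ i" using i' v by simp
    qed (use Mc v in simp)
    hence "eigenvector Mc v (complex_of_real R' * z)" unfolding eigenvector_def using Mc v by simp
    hence "complex_of_real R' * z \<in> spectrum Mc" unfolding spectrum_def eigenvalue_def by auto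
    hence "norm (complex_of_real R' * z) \<le> \<rho>" unfolding \<rho>_def
      by (intro spectral_radius_mem_max(2)[OF Mc n]) auto
    hence "R' * norm z \<le> \<rho>" using R'1 by (simp add: norm_mult)
    hence "R' * norm z < R' * 1" using R'1 by linarith
    hence "norm z < 1" using R'1 by (simp only: mult_less_cancel_left_pos)
    thus ?thesis using z by simp
  qed
  from spectral_radius_jnf_norm_bound_less_1_upper_triangular[OF Bc sr1]
  obtain c where c: "\<And>k. norm_bound (Bc ^\<^sub>m k) c" by auto
  have bnd: "\<bar>(B ^\<^sub>m k) $$ (i,j)\<bar> \<le> c" if "i < n" "j < n" for k i j
  proof -
    have "Bc ^\<^sub>m k = map_mat complex_of_real (B ^\<^sub>m k)"
      unfolding Bc_def using of_real_hom.mat_hom_pow[OF B, of k] by (simp only: eq_commute)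
    with c[of k] that B show ?thesis unfolding norm_bound_def by fastforce
  qed
  define C where "C = c * (\<Sum>i<n. \<bar>x i\<bar>)^2"
  have qbnd: "qf n (B ^\<^sub>m k) x \<le> C" for k
    unfolding C_def by (rule qf_bound) (use bnd in auto)
  define t where "t = R / R'"
  have t: "t > 1" using R'1 unfolding t_def by simp
  have q1: "qf n (B ^\<^sub>m 1) x = t * Q"
  proof -
    have "B ^\<^sub>m 1 = B" using B by simp
    hence "qf n (B ^\<^sub>m 1) x = (1 / R') * qf n M x"
      unfolding qf_def B_def using M by (simp add: sum_distrib_left mult_ac)
    thus ?thesis unfolding qR t_def by simp
  qed
  have Bsym: "transpose_mat B = B" unfolding B_def
    by (rule eq_matI) (use M sym in \<open>auto simp: mat_eq_iff\<close>)
  have sqr: "(qf n (B ^\<^sub>m m) x)^2 \<le> Q * qf n (B ^\<^sub>m (2 * m)) x" for m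
  proof -
    have P: "B ^\<^sub>m m \<in> carrier_mat n n" using B by simp
    have "B ^\<^sub>m (2 * m) = B ^\<^sub>m m * B ^\<^sub>m m" using pow_mat_add[OF B, of m m] by (simp add: mult_2)
    moreover have "(B ^\<^sub>m m) $$ (i,j) = (B ^\<^sub>m m) $$ (j,i)" if "i < n" "j < n" for i j
    proof -
      have "(B ^\<^sub>m m) $$ (i,j) = transpose_mat (B ^\<^sub>m m) $$ (i,j)"
        using pow_mat_transpose[OF B Bsym, of m] by simp
      also have "\<dots> = (B ^\<^sub>m m) $$ (j,i)" using that B by simp
      finally show ?thesis .
    qed
    ultimately show ?thesis using qf_square[OF P, of x] unfolding Q_def by simp
  qed
  have pw: "qf n (B ^\<^sub>m (2^k)) x \<ge> Q * t^(2^k)" for k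
  proof (induct k)
    case 0 then show ?case using q1 by simp
  next
    case (Suc k)
    have "Q * t^(2^Suc k) = (Q * t^(2^k))^2 / Q" using Q
      by (simp add: power2_eq_square power_mult[symmetric] mult_2 power_add)
    also have "\<dots> \<le> (qf n (B ^\<^sub>m (2^k)) x)^2 / Q"
      using Suc Q t by (intro divide_right_mono power_mono) auto
    also have "\<dots> \<le> qf n (B ^\<^sub>m (2^Suc k)) x"
      using sqr[of "2^k"] Q by (simp add: pos_divide_le_eq mult.commute)
    finally show ?case .
  qed
  define k where "k = nat \<lceil>C / (Q * (t - 1))\<rceil>"
  have kge: "real k \<ge> C / (Q * (t - 1))" unfolding k_def by linarith
  have "1 + real (2^k) * (t - 1) \<le> (1 + (t - 1))^(2^k)"
    by (rule Bernoulli_inequality) (use t in simp)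
  hence "1 + real (2^k) * (t - 1) \<le> t^(2^k)" by simp
  moreover have "real k < real (2^k)" using less_exp[of k] by (simp only: of_nat_less_iff)
  ultimately have "1 + real k * (t - 1) < t^(2^k)" using t
    by (smt (verit) mult_strict_right_mono)
  hence "Q * (1 + real k * (t - 1)) < Q * t^(2^k)" using Q by simp
  also have "\<dots> \<le> C" using pw[of k] qbnd[of "2^k"] by simp
  finally have "Q + Q * (t - 1) * real k < C" by (simp add: algebra_simps)
  moreover have "Q * (t - 1) * real k \<ge> C" using kge Q t by (simp add: pos_divide_le_eq mult.commute)
  ultimately show False using Q by simp
qed



lemma sr_upper:
  fixes M :: "real mat"
  assumes M: "M \<in> carrier_mat n n" and nonneg: "\<And>i j. i < n \<Longrightarrow> j < n \<Longrightarrow> M $$ (i,j) \<ge> 0"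
    and y: "\<And>i. i < n \<Longrightarrow> y i > 0"
    and My: "\<And>i. i < n \<Longrightarrow> (\<Sum>j<n. M $$ (i,j) * y j) \<le> \<mu> * y i"
    and n: "n > 0"
  shows "spectral_radius (map_mat complex_of_real M) \<le> \<mu>"
proof -
  define Mc where "Mc = map_mat complex_of_real M"
  have Mc: "Mc \<in> carrier_mat n n" using M unfolding Mc_def by simp
  from spectral_radius_mem_max(1)[OF Mc n] obtain z where z: "z \<in> spectrum Mc" "spectral_radius Mc = norm z"
    by auto
  then obtain v where ev: "eigenvector Mc v z" unfolding spectrum_def eigenvalue_def by auto
  hence v: "v \<in> carrier_vec n" "v \<noteq> 0\<^sub>v n" "Mc *\<^sub>v v = z \<cdot>\<^sub>v v" unfolding eigenvector_def using Mc by auto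
  define f where "f i = norm (v $ i) / y i" for i
  define t where "t = Max (f ` {..<n})"
  have fin: "finite (f ` {..<n})" and ne: "f ` {..<n} \<noteq> {}" using n by auto
  obtain i0 where i0: "i0 < n" "f i0 = t" using Max_in[OF fin ne] unfolding t_def by auto
  have fle: "f j \<le> t" if "j < n" for j unfolding t_def using that fin by (intro Max_ge) auto
  have vle: "norm (v $ j) \<le> t * y j" if "j < n" for j
    using fle[OF that] y[OF that] unfolding f_def by (simp add: pos_divide_le_eq)
  obtain j0 where j0: "j0 < n" "v $ j0 \<noteq> 0"
  proof -
    have "\<exists>j<n. v $ j \<noteq> 0"
    proof (rule ccontr)
      assume "\<not> ?thesis"
      hence "v = 0\<^sub>v n" using v(1) by (intro eq_vecI) auto
      with v(2) show False by simp
    qed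
    thus ?thesis using that by auto
  qed
  have "t > 0"
  proof -
    have "f j0 > 0" using j0 y[OF j0(1)] unfolding f_def by simp
    thus ?thesis using fle[OF j0(1)] by simp
  qed
  have vi0: "norm (v $ i0) = t * y i0" using i0 y[OF i0(1)] unfolding f_def by (simp add: field_simps)
  have "norm z * norm (v $ i0) = norm ((Mc *\<^sub>v v) $ i0)" using v i0 by (simp add: norm_mult)
  also have "(Mc *\<^sub>v v) $ i0 = (\<Sum>j<n. complex_of_real (M $$ (i0,j)) * v $ j)"
    using Mc v(1) i0 M unfolding Mc_def by (simp add: scalar_prod_def atLeast0LessThan)
  also have "norm \<dots> \<le> (\<Sum>j<n. norm (complex_of_real (M $$ (i0,j)) * v $ j))" by (rule norm_sum)
  also have "\<dots> \<le> (\<Sum>j<n. M $$ (i0,j) * (t * y j))"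
  proof (rule sum_mono)
    fix j assume j: "j \<in> {..<n}"
    have "norm (complex_of_real (M $$ (i0,j)) * v $ j) = M $$ (i0,j) * norm (v $ j)"
      using nonneg[OF i0(1)] j by (simp add: norm_mult)
    also have "\<dots> \<le> M $$ (i0,j) * (t * y j)" using nonneg[OF i0(1)] j vle by (intro mult_left_mono) auto
    finally show "norm (complex_of_real (M $$ (i0,j)) * v $ j) \<le> M $$ (i0,j) * (t * y j)" .
  qed
  also have "\<dots> = t * (\<Sum>j<n. M $$ (i0,j) * y j)" by (simp add: sum_distrib_left mult_ac)
  also have "\<dots> \<le> t * (\<mu> * y i0)" using My[OF i0(1)] \<open>t > 0\<close> by simp
  also have "\<dots> = \<mu> * norm (v $ i0)" using vi0 by simp
  finally have "norm z * norm (v $ i0) \<le> \<mu> * norm (v $ i0)" .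
  moreover have "norm (v $ i0) > 0" using vi0 \<open>t > 0\<close> y[OF i0(1)] by simp
  ultimately have "norm z \<le> \<mu>" by simp
  thus ?thesis using z unfolding Mc_def by simp
qed


definition rmat :: "nat \<Rightarrow> (nat \<Rightarrow> nat \<Rightarrow> bool) \<Rightarrow> real mat" where
  "rmat n E = mat n n (\<lambda>(i, j). if E i j then 1 else 0)"

lemma adj_mat_rmat: "adj_mat n E = map_mat complex_of_real (rmat n E)"
  unfolding adj_mat_def rmat_def by (rule eq_matI) auto

lemma rmat_carrier: "rmat n E \<in> carrier_mat n n" unfolding rmat_def by simp


definition nb :: "nat \<Rightarrow> (nat \<Rightarrow> nat \<Rightarrow> bool) \<Rightarrow> nat \<Rightarrow> nat set" where
  "nb n E i = {j. j < n \<and> j \<noteq> i \<and> \<not> E i j}"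

definition hh :: "nat \<Rightarrow> (nat \<Rightarrow> nat \<Rightarrow> bool) \<Rightarrow> nat \<Rightarrow> nat" where
  "hh n E i = card (nb n E i)"

definition dg :: "nat \<Rightarrow> (nat \<Rightarrow> nat \<Rightarrow> bool) \<Rightarrow> nat \<Rightarrow> nat" where
  "dg n E i = card {j. j < n \<and> E i j}"

lemma nb_finite[simp]: "finite (nb n E i)" unfolding nb_def by auto

lemma dg_hh: assumes G: "simple_graph n E" and i: "i < n"
  shows "dg n E i + hh n E i = n - 1"
proof -
  have "{j. j < n \<and> E i j} \<union> nb n E i = {..<n} - {i}"
    using G i unfolding nb_def simple_graph_def by auto
  moreover have "{j. j < n \<and> E i j} \<inter> nb n E i = {}" unfolding nb_def by auto
  ultimately have "card {j. j < n \<and> E i j} + card (nb n E i) = card ({..<n} - {i})"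
    by (metis card_Un_disjoint finite_Diff finite_lessThan finite_subset Un_upper1 Un_upper2)
  thus ?thesis unfolding dg_def hh_def using i by simp
qed

lemma sg_irr: "simple_graph n E \<Longrightarrow> i < n \<Longrightarrow> \<not> E i i"
  unfolding simple_graph_def by blast

lemma sg_sym: "simple_graph n E \<Longrightarrow> i < n \<Longrightarrow> j < n \<Longrightarrow> E i j \<Longrightarrow> E j i"
  unfolding simple_graph_def by blast

lemma rmat_sym: assumes G: "simple_graph n E" shows "transpose_mat (rmat n E) = rmat n E"
proof -
  have symE: "E j i \<longleftrightarrow> E i j" if "i < n" "j < n" for i j using sg_sym[OF G] that by blast
  show ?thesis unfolding rmat_def by (rule eq_matI) (simp_all add: symE)
qed

lemma sum_dg: assumes G: "simple_graph n E"
  shows "(\<Sum>i<n. dg n E i) = 2 * num_edges n E"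
proof -
  define P where "P = {(i, j). i < j \<and> j < n \<and> E i j}"
  define P2 where "P2 = {(i, j). j < i \<and> i < n \<and> E i j}"
  have finP: "finite P" unfolding P_def by (rule finite_subset[of _ "{..<n} \<times> {..<n}"]) auto
  have P2eq: "P2 = prod.swap ` P"
  proof
    show "prod.swap ` P \<subseteq> P2"
    proof
      fix p assume "p \<in> prod.swap ` P"
      then obtain i j where p: "p = (j,i)" "i < j" "j < n" "E i j" by (auto simp: P_def)
      hence "E j i" using sg_sym[OF G, of i j] by simp
      thus "p \<in> P2" using p by (simp add: P2_def)
    qed
    show "P2 \<subseteq> prod.swap ` P"
    proof
      fix p assume "p \<in> P2"
      then obtain i j where p: "p = (i,j)" "j < i" "i < n" "E i j" by (auto simp: P2_def)
      hence "E j i" using sg_sym[OF G, of i j] by simp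
      hence "(j,i) \<in> P" using p by (simp add: P_def)
      thus "p \<in> prod.swap ` P" using p by (auto intro: image_eqI[where x="(j,i)"])
    qed
  qed
  hence cP2: "card P2 = card P" by (simp add: card_image)
  have finP2: "finite P2" using P2eq finP by simp
  have "(\<Sum>i<n. dg n E i) = card (SIGMA i:{..<n}. {j. j < n \<and> E i j})"
    unfolding dg_def by (rule card_SigmaI[symmetric]) auto
  also have "(SIGMA i:{..<n}. {j. j < n \<and> E i j}) = P \<union> P2"
  proof (rule equalityI)
    show "(SIGMA i:{..<n}. {j. j < n \<and> E i j}) \<subseteq> P \<union> P2"
    proof (rule subsetI)
      fix p assume a: "p \<in> (SIGMA i:{..<n}. {j. j < n \<and> E i j})"
      obtain i j where p: "p = (i,j)" by (cases p)
      have ij: "i < n" "j < n" "E i j" using a p by auto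
      hence "i \<noteq> j" using sg_irr[OF G, of i] by auto
      hence "i < j \<or> j < i" by arith
      thus "p \<in> P \<union> P2" using ij p by (auto simp: P_def P2_def)
    qed
    show "P \<union> P2 \<subseteq> (SIGMA i:{..<n}. {j. j < n \<and> E i j})" by (auto simp: P_def P2_def)
  qed
  also have "card (P \<union> P2) = card P + card P2"
    by (rule card_Un_disjoint[OF finP finP2]) (auto simp: P_def P2_def)
  finally show ?thesis using cP2 unfolding num_edges_def P_def by simp
qed

lemma sum_hh: assumes G: "simple_graph n E"
  shows "real (2 * num_edges n E) = real n * (real n - 1) - (\<Sum>i<n. real (hh n E i))"
proof -
  have one: "real (dg n E i) + real (hh n E i) = real n - 1" if i: "i < n" for i
  proof -
    have e: "dg n E i + hh n E i = n - 1" using dg_hh[OF G i] .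
    have "real (dg n E i + hh n E i) = real (n - 1)" by (simp only: e)
    also have "\<dots> = real n - 1" using i by (simp add: of_nat_diff)
    finally show ?thesis by simp
  qed
  have "(\<Sum>i<n. real (dg n E i) + real (hh n E i)) = (\<Sum>i<n. real n - 1)"
    by (rule sum.cong[OF refl]) (simp add: one)
  hence "(\<Sum>i<n. real (dg n E i)) + (\<Sum>i<n. real (hh n E i)) = real n * (real n - 1)"
    by (simp add: sum.distrib)
  moreover have "(\<Sum>i<n. real (dg n E i)) = real (2 * num_edges n E)"
    using sum_dg[OF G] by (metis of_nat_sum)
  ultimately show ?thesis by linarith
qed

lemma sum_subset_if: fixes n :: nat assumes "B \<subseteq> {..<n}"
  shows "(\<Sum>j\<in>B. g j) = (\<Sum>j<n. if j \<in> B then g j else 0)"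
proof -
  have eq: "{j \<in> {..<n}. j \<in> B} = B" using assms by auto
  have "sum g {j \<in> {..<n}. j \<in> B} = (\<Sum>j<n. if j \<in> B then g j else 0)"
    by (rule sum.inter_filter) simp
  thus ?thesis unfolding eq .
qed

lemma nb_sym: assumes G: "simple_graph n E" and "i < n" "j < n"
  shows "j \<in> nb n E i \<longleftrightarrow> i \<in> nb n E j"
proof -
  have "E i j \<longleftrightarrow> E j i" using sg_sym[OF G] assms by blast
  thus ?thesis using assms unfolding nb_def by auto
qed

lemma sum_nb_swap: assumes G: "simple_graph n E"
  shows "(\<Sum>i<n. \<Sum>j\<in>nb n E i. g j) = (\<Sum>j<n. real (hh n E j) * g j)"
proof -
  have "(\<Sum>i<n. \<Sum>j\<in>nb n E i. g j) = (\<Sum>i<n. \<Sum>j<n. if j \<in> nb n E i then g j else 0)"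
    by (rule sum.cong[OF refl], rule sum_subset_if) (auto simp: nb_def)
  also have "\<dots> = (\<Sum>j<n. \<Sum>i<n. if j \<in> nb n E i then g j else 0)" by (rule sum.swap)
  also have "\<dots> = (\<Sum>j<n. \<Sum>i\<in>nb n E j. g j)"
  proof (rule sum.cong[OF refl])
    fix j assume j: "j \<in> {..<n}"
    have "(\<Sum>i<n. if j \<in> nb n E i then g j else 0) = (\<Sum>i\<in>{i \<in> {..<n}. j \<in> nb n E i}. g j)"
      by (rule sum.inter_filter[symmetric]) simp
    also have "{i \<in> {..<n}. j \<in> nb n E i} = nb n E j"
    proof (rule equalityI; rule subsetI)
      fix i assume "i \<in> {i \<in> {..<n}. j \<in> nb n E i}"
      thus "i \<in> nb n E j" using nb_sym[OF G, of i j] j by auto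
    next
      fix i assume i: "i \<in> nb n E j"
      hence "i < n" by (simp add: nb_def)
      thus "i \<in> {i \<in> {..<n}. j \<in> nb n E i}" using nb_sym[OF G, of i j] j i by auto
    qed
    finally show "(\<Sum>i<n. if j \<in> nb n E i then g j else 0) = (\<Sum>i\<in>nb n E j. g j)" .
  qed
  also have "\<dots> = (\<Sum>j<n. real (hh n E j) * g j)" unfolding hh_def by simp
  finally show ?thesis .
qed

lemma qf_identity: assumes G: "simple_graph n E"
  shows "qf n (rmat n E) x = (\<Sum>i<n. x i)^2 - (\<Sum>i<n. (1 + real (hh n E i)) * (x i)^2)
     + (\<Sum>i<n. \<Sum>j\<in>nb n E i. (x i - x j)^2) / 2"
proof -
  define S where "S = (\<Sum>i<n. x i)"
  define Z where "Z = (\<Sum>i<n. \<Sum>j\<in>nb n E i. x i * x j)"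
  have row: "(\<Sum>j<n. (if E i j then 1 else 0) * x j) = S - x i - (\<Sum>j\<in>nb n E i. x j)" if i: "i < n" for i
  proof -
    define A where "A = {j. j < n \<and> E i j}"
    have part: "{..<n} = insert i (A \<union> nb n E i)" using i unfolding A_def nb_def by auto
    have disj: "i \<notin> A \<union> nb n E i" "A \<inter> nb n E i = {}"
      using sg_irr[OF G i] unfolding A_def nb_def by auto
    have finA: "finite A" unfolding A_def by auto
    have "S = x i + (\<Sum>j\<in>A. x j) + (\<Sum>j\<in>nb n E i. x j)"
      unfolding S_def part using disj finA by (simp add: sum.union_disjoint)
    moreover have "(\<Sum>j<n. (if E i j then 1 else 0) * x j) = (\<Sum>j\<in>A. x j)"
      unfolding A_def by (subst sum_subset_if[of _ n]) (auto intro!: sum.cong)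
    ultimately show ?thesis by simp
  qed
  have "qf n (rmat n E) x = (\<Sum>i<n. x i * (\<Sum>j<n. (if E i j then 1 else 0) * x j))"
    unfolding qf_def rmat_def by (simp add: sum_distrib_left mult.assoc)
  also have "\<dots> = (\<Sum>i<n. x i * (S - x i - (\<Sum>j\<in>nb n E i. x j)))"
    using row by simp
  also have "\<dots> = S * S - (\<Sum>i<n. (x i)^2) - Z"
    unfolding Z_def S_def by (simp add: algebra_simps sum_subtractf sum_distrib_left sum_distrib_right power2_eq_square)
  finally have q: "qf n (rmat n E) x = S * S - (\<Sum>i<n. (x i)^2) - Z" .
  have "(\<Sum>i<n. \<Sum>j\<in>nb n E i. (x i - x j)^2) =
        (\<Sum>i<n. \<Sum>j\<in>nb n E i. (x i)^2) + (\<Sum>i<n. \<Sum>j\<in>nb n E i. (x j)^2) - 2 * Z"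
    unfolding Z_def by (simp add: power2_diff sum_subtractf sum.distrib sum_distrib_left mult.assoc)
  also have "(\<Sum>i<n. \<Sum>j\<in>nb n E i. (x i)^2) = (\<Sum>i<n. real (hh n E i) * (x i)^2)"
    unfolding hh_def by simp
  also have "(\<Sum>i<n. \<Sum>j\<in>nb n E i. (x j)^2) = (\<Sum>i<n. real (hh n E i) * (x i)^2)"
    by (rule sum_nb_swap[OF G])
  finally have w: "(\<Sum>i<n. \<Sum>j\<in>nb n E i. (x i - x j)^2) = 2 * (\<Sum>i<n. real (hh n E i) * (x i)^2) - 2 * Z"
    by simp
  show ?thesis unfolding q w S_def
    by (simp add: power2_eq_square algebra_simps sum.distrib) (simp add: field_simps)
qed



definition mu :: "nat \<Rightarrow> nat \<Rightarrow> real" where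
  "mu r n = (let a = real (n div r); d = real n - 2 * a - 1
             in (d + sqrt (d^2 + 4 * (real r - 1) * a * (a + 1))) / 2)"

definition KK :: "nat \<Rightarrow> nat \<Rightarrow> real" where
  "KK r n = (let a = real (n div r); b = real (n mod r)
             in b * (a + 1) * a + (real r - b) * a * (a - 1))"

lemma mu_facts:
  assumes r: "r \<ge> 1"
  shows "mu r n \<ge> 0"
    and "n \<ge> 2 \<Longrightarrow> mu r n + real (n div r) > 0"
    and "real n * (mu r n + 2 * real (n div r)) - KK r n
         = (mu r n + real (n div r)) * (mu r n + real (n div r) + 1)"
proof -
  define a where "a = real (n div r)"
  define b where "b = real (n mod r)"
  define d where "d = real n - 2 * a - 1"
  define e where "e = 4 * (real r - 1) * a * (a + 1)"
  define s where "s = sqrt (d^2 + e)"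
  have e0: "e \<ge> 0" unfolding e_def a_def using r by simp
  have s2: "s^2 = d^2 + e" unfolding s_def using e0 by simp
  have sd: "s \<ge> \<bar>d\<bar>" unfolding s_def using e0
    by (metis abs_ge_zero add_le_same_cancel1 real_sqrt_abs real_sqrt_le_mono zero_le_power2 le_add_same_cancel1)
  have mu: "mu r n = (d + s) / 2" unfolding mu_def Let_def s_def d_def e_def a_def by simp
  have ds: "d + s \<ge> 0" using sd abs_ge_minus_self[of d] by linarith
  show "mu r n \<ge> 0" unfolding mu using ds by simp
  have quad: "(mu r n)^2 - d * mu r n - (real r - 1) * a * (a + 1) = 0"
    unfolding mu using s2 unfolding e_def by (simp add: power2_eq_square field_simps)
  have nrel: "real n = real r * a + b" unfolding a_def b_def
    by (metis of_nat_add of_nat_mult div_mult_mod_eq mult.commute)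
  have KK: "KK r n = b * (a + 1) * a + (real r - b) * a * (a - 1)"
    unfolding KK_def Let_def a_def b_def by simp
  show "real n * (mu r n + 2 * real (n div r)) - KK r n
         = (mu r n + real (n div r)) * (mu r n + real (n div r) + 1)"
  proof -
    have "real n * (mu r n + 2 * a) - KK r n - (mu r n + a) * (mu r n + a + 1)
          = - ((mu r n)^2 - d * mu r n - (real r - 1) * a * (a + 1))
            + (2 * real n * a - KK r n - real r * a * (a + 1))"
      unfolding d_def by (simp add: power2_eq_square algebra_simps)
    also have "2 * real n * a - KK r n - real r * a * (a + 1) = 0"
      unfolding KK nrel by (simp add: algebra_simps)
    finally show ?thesis using quad unfolding a_def by simp
  qed
  show "n \<ge> 2 \<Longrightarrow> mu r n + real (n div r) > 0"
  proof -
    assume n: "n \<ge> 2"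
    show ?thesis
    proof (cases "n div r = 0")
      case True
      hence "a = 0" unfolding a_def by simp
      hence dn: "d = real n - 1" "e = 0" unfolding d_def e_def by simp_all
      hence "s = real n - 1" unfolding s_def using n dn by simp
      hence "mu r n = real n - 1" unfolding mu using dn by simp
      thus ?thesis using n by simp
    next
      case False
      hence "real (n div r) > 0" by simp
      thus ?thesis using \<open>mu r n \<ge> 0\<close> by simp
    qed
  qed
qed


definition good :: "nat \<Rightarrow> nat \<Rightarrow> (nat \<Rightarrow> nat \<Rightarrow> bool) \<Rightarrow> bool" where
  "good r n E \<longleftrightarrow> simple_graph n E \<and> (\<forall>i<n. hh n E i = n div r \<or> hh n E i + 1 = n div r)
     \<and> (\<Sum>i<n. real (hh n E i)) = KK r n
     \<and> (\<forall>i<n. \<forall>j<n. i \<noteq> j \<and> \<not> E i j \<longrightarrow> hh n E i = hh n E j)"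

definition xv :: "nat \<Rightarrow> nat \<Rightarrow> (nat \<Rightarrow> nat \<Rightarrow> bool) \<Rightarrow> nat \<Rightarrow> real" where
  "xv r n E i = 1 / (mu r n + 1 + real (hh n E i))"

lemma zterm_nonneg: "(real h - real a) * (real h - real a + 1) \<ge> 0" for h a :: nat
proof (cases "h \<ge> a")
  case True thus ?thesis by simp
next
  case False
  hence "real h - real a \<le> 0" "real h - real a + 1 \<le> 0" by linarith+
  thus ?thesis by (rule mult_nonpos_nonpos)
qed

lemma zterm_zero: "(real h - real a) * (real h - real a + 1) = 0 \<Longrightarrow> h = a \<or> h + 1 = a" for h a :: nat
proof -
  assume "(real h - real a) * (real h - real a + 1) = 0"
  hence "real h - real a = 0 \<or> real h - real a + 1 = 0" by simp
  thus ?thesis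
  proof (elim disjE)
    assume "real h - real a = 0" thus ?thesis by simp
  next
    assume "real h - real a + 1 = 0"
    hence "h + 1 = a" by linarith
    thus ?thesis by simp
  qed
qed

lemma xv_facts: assumes r: "r \<ge> 1"
  shows "xv r n E i > 0" "xv r n E i * (mu r n + 1 + real (hh n E i)) = 1"
proof -
  have "mu r n + 1 + real (hh n E i) > 0" using mu_facts(1)[OF r, of n] of_nat_0_le_iff[of "hh n E i"] by linarith
  thus "xv r n E i > 0" "xv r n E i * (mu r n + 1 + real (hh n E i)) = 1" unfolding xv_def by simp_all
qed

lemma calc_DS: assumes r: "r \<ge> 1"
  shows "(\<Sum>i<n. xv r n E i) * ((mu r n + real (n div r)) * (mu r n + real (n div r) + 1))
     = (mu r n + real (n div r)) * (mu r n + real (n div r) + 1) + (KK r n - (\<Sum>i<n. real (hh n E i)))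
       + (\<Sum>i<n. (real (hh n E i) - real (n div r)) * (real (hh n E i) - real (n div r) + 1) * xv r n E i)"
proof -
  define \<mu> where "\<mu> = mu r n"
  define a where "a = real (n div r)"
  define h where "h i = real (hh n E i)" for i
  define x where "x i = xv r n E i" for i
  define D where "D = (\<mu> + a) * (\<mu> + a + 1)"
  have key: "real n * (\<mu> + 2*a) - KK r n = D" using mu_facts(3)[OF r] unfolding D_def \<mu>_def a_def .
  have xu: "x i * (\<mu> + 1 + h i) = 1" for i using xv_facts(2)[OF r] unfolding x_def \<mu>_def h_def .
  have Dx: "D * x i = (\<mu> + 2*a - h i) + (h i - a) * (h i - a + 1) * x i" for i
  proof -
    have "D = (\<mu> + 2*a - h i) * (\<mu> + 1 + h i) + (h i - a) * (h i - a + 1)"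
      unfolding D_def by (simp add: algebra_simps)
    hence "D * x i = (\<mu> + 2*a - h i) * (x i * (\<mu> + 1 + h i)) + (h i - a) * (h i - a + 1) * x i"
      by (simp add: algebra_simps)
    thus ?thesis using xu by simp
  qed
  have "(\<Sum>i<n. x i) * D = (\<Sum>i<n. D * x i)"
    by (subst mult.commute) (rule sum_distrib_left)
  also have "\<dots> = (\<Sum>i<n. (\<mu> + 2*a - h i) + (h i - a) * (h i - a + 1) * x i)"
    by (simp only: Dx)
  also have "\<dots> = real n * (\<mu> + 2*a) - (\<Sum>i<n. h i) + (\<Sum>i<n. (h i - a) * (h i - a + 1) * x i)"
    by (simp add: sum.distrib sum_subtractf)
  finally have "(\<Sum>i<n. x i) * D = D + (KK r n - (\<Sum>i<n. h i)) + (\<Sum>i<n. (h i - a) * (h i - a + 1) * x i)"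
    using key by linarith
  thus ?thesis unfolding x_def D_def \<mu>_def a_def h_def .
qed

lemma row_sum: assumes G: "simple_graph n E" and i: "i < n"
  shows "(\<Sum>j<n. rmat n E $$ (i,j) * x j) = (\<Sum>j<n. x j) - x i - (\<Sum>j\<in>nb n E i. x j)"
proof -
  define A where "A = {j. j < n \<and> E i j}"
  have part: "{..<n} = insert i (A \<union> nb n E i)" using i unfolding A_def nb_def by auto
  have disj: "i \<notin> A \<union> nb n E i" "A \<inter> nb n E i = {}"
    using sg_irr[OF G i] unfolding A_def nb_def by auto
  have finA: "finite A" unfolding A_def by auto
  have "(\<Sum>j<n. x j) = x i + (\<Sum>j\<in>A. x j) + (\<Sum>j\<in>nb n E i. x j)"
    unfolding part using disj finA by (simp add: sum.union_disjoint)
  moreover have "(\<Sum>j<n. rmat n E $$ (i,j) * x j) = (\<Sum>j<n. if j \<in> A then x j else 0)"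
    unfolding A_def rmat_def using i by (intro sum.cong refl) auto
  moreover have "(\<Sum>j\<in>A. x j) = (\<Sum>j<n. if j \<in> A then x j else 0)"
    by (rule sum_subset_if) (auto simp: A_def)
  ultimately show ?thesis by simp
qed

lemma main_lower:
  assumes r: "r \<ge> 1" and n: "n \<ge> 2" and G: "simple_graph n E"
    and hs: "(\<Sum>i<n. real (hh n E i)) \<le> KK r n"
  shows "mu r n \<le> graph_spectral_radius n E"
    and "graph_spectral_radius n E \<le> mu r n \<Longrightarrow> good r n E"
proof -
  define \<mu> where "\<mu> = mu r n"
  define a where "a = real (n div r)"
  define h where "h i = real (hh n E i)" for i
  define x where "x i = xv r n E i" for i
  define D where "D = (\<mu> + a) * (\<mu> + a + 1)"
  define S where "S = (\<Sum>i<n. x i)"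
  define Q where "Q = (\<Sum>i<n. (x i)^2)"
  define Z where "Z = (\<Sum>i<n. (h i - a) * (h i - a + 1) * x i)"
  define W where "W = (\<Sum>i<n. \<Sum>j\<in>nb n E i. (x i - x j)^2)"
  define \<rho> where "\<rho> = graph_spectral_radius n E"
  have \<mu>0: "\<mu> \<ge> 0" using mu_facts(1)[OF r] unfolding \<mu>_def .
  have Dpos: "D > 0" using mu_facts(2)[OF r n] \<mu>0 unfolding D_def \<mu>_def a_def
    by (intro mult_pos_pos) auto
  have xpos: "x i > 0" for i using xv_facts(1)[OF r] unfolding x_def .
  have xu: "x i * (\<mu> + 1 + h i) = 1" for i using xv_facts(2)[OF r] unfolding x_def \<mu>_def h_def .
  have DS: "S * D = D + (KK r n - (\<Sum>i<n. h i)) + Z"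
    using calc_DS[OF r, of n E] unfolding S_def D_def Z_def x_def h_def \<mu>_def a_def .
  have Z0: "Z \<ge> 0" unfolding Z_def h_def a_def
    by (intro sum_nonneg mult_nonneg_nonneg zterm_nonneg less_imp_le[OF xpos])
  have S1: "S \<ge> 1"
  proof -
    have "S * D \<ge> 1 * D" using DS Z0 hs unfolding h_def by simp
    thus ?thesis using Dpos by simp
  qed
  have sq: "(1 + h i) * (x i)^2 = x i - \<mu> * (x i)^2" for i
  proof -
    have ex: "x i * (\<mu> + 1 + h i) = x i + \<mu> * x i + h i * x i" by (simp add: algebra_simps)
    have e1: "(1 + h i) * x i = 1 - \<mu> * x i" using xu[of i] ex by (simp add: algebra_simps)
    have "(1 + h i) * (x i)^2 = x i * ((1 + h i) * x i)" by (simp add: power2_eq_square)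
    also have "\<dots> = x i - \<mu> * (x i)^2" unfolding e1 by (simp add: power2_eq_square algebra_simps)
    finally show ?thesis .
  qed
  have qfx: "qf n (rmat n E) x = S^2 - S + \<mu> * Q + W / 2"
  proof -
    have "(\<Sum>i<n. (1 + real (hh n E i)) * (x i)^2) = S - \<mu> * Q"
      using sq unfolding S_def Q_def h_def by (simp add: sum_subtractf sum_distrib_left)
    thus ?thesis using qf_identity[OF G, of x] unfolding S_def W_def by simp
  qed
  have W0: "W \<ge> 0" unfolding W_def by (intro sum_nonneg) simp
  have Qpos: "Q > 0"
  proof -
    have "(x i)^2 > 0" for i using xpos[of i] by simp
    moreover have "0 \<in> {..<n}" using n by simp
    hence "{..<n} \<noteq> {}" by blast
    ultimately show ?thesis unfolding Q_def by (intro sum_pos) auto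
  qed
  have ray: "qf n (rmat n E) x \<le> \<rho> * Q"
    using rayleigh[OF rmat_carrier rmat_sym[OF G], of x] Qpos
    unfolding \<rho>_def graph_spectral_radius_def adj_mat_rmat Q_def by simp
  have SS: "S^2 - S \<ge> 0" using S1 by (simp add: power2_eq_square)
  have lowQ: "\<mu> * Q \<le> \<rho> * Q" using qfx ray SS W0 by linarith
  thus "mu r n \<le> graph_spectral_radius n E" using Qpos unfolding \<mu>_def \<rho>_def by simp
  assume up: "graph_spectral_radius n E \<le> mu r n"
  hence "\<rho> * Q \<le> \<mu> * Q" using Qpos unfolding \<rho>_def \<mu>_def by (intro mult_right_mono) auto
  hence "S^2 - S + W / 2 \<le> 0" using qfx ray by linarith
  hence W00: "W = 0" and SS0: "S^2 - S = 0" using SS W0 by linarith+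
  have S11: "S = 1"
  proof -
    have "S * (S - 1) = 0" using SS0 by (simp add: power2_eq_square algebra_simps)
    thus ?thesis using S1 by simp
  qed
  hence "KK r n - (\<Sum>i<n. h i) + Z = 0" using DS by simp
  moreover have "KK r n - (\<Sum>i<n. h i) \<ge> 0" using hs unfolding h_def by simp
  ultimately have hsum: "(\<Sum>i<n. h i) = KK r n" and Zz: "Z = 0" using Z0 by linarith+
  have c1: "hh n E i = n div r \<or> hh n E i + 1 = n div r" if i: "i < n" for i
  proof -
    have "\<forall>i\<in>{..<n}. (h i - a) * (h i - a + 1) * x i = 0"
      using Zz unfolding Z_def h_def a_def
      by (subst sum_nonneg_eq_0_iff[symmetric]) (auto intro!: mult_nonneg_nonneg zterm_nonneg less_imp_le[OF xpos])
    hence "(h i - a) * (h i - a + 1) * x i = 0" using i by simp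
    hence "(h i - a) * (h i - a + 1) = 0" using xpos[of i] by simp
    thus ?thesis unfolding h_def a_def by (rule zterm_zero)
  qed
  have c3: "hh n E i = hh n E j" if ij: "i < n" "j < n" "i \<noteq> j" "\<not> E i j" for i j
  proof -
    have jn: "j \<in> nb n E i" using ij unfolding nb_def by auto
    have "\<forall>i\<in>{..<n}. (\<Sum>j\<in>nb n E i. (x i - x j)^2) = 0"
      using W00 unfolding W_def by (subst sum_nonneg_eq_0_iff[symmetric]) (auto intro!: sum_nonneg)
    hence "(\<Sum>j\<in>nb n E i. (x i - x j)^2) = 0" using ij by simp
    hence "\<forall>j\<in>nb n E i. (x i - x j)^2 = 0" by (subst sum_nonneg_eq_0_iff[symmetric]) auto
    hence "x i = x j" using jn by simp
    hence "x i * (\<mu> + 1 + h j) = 1" using xu[of j] by simp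
    hence "x i * (\<mu> + 1 + h j) = x i * (\<mu> + 1 + h i)" using xu[of i] by simp
    hence "h i = h j" using xpos[of i] by simp
    thus ?thesis unfolding h_def by simp
  qed
  show "good r n E" unfolding good_def using G c1 c3 hsum unfolding h_def by blast
qed


lemma good_upper:
  assumes r: "r \<ge> 1" and n: "n \<ge> 2" and g: "good r n E"
  shows "graph_spectral_radius n E \<le> mu r n"
proof -
  define \<mu> where "\<mu> = mu r n"
  define a where "a = real (n div r)"
  define h where "h i = real (hh n E i)" for i
  define x where "x i = xv r n E i" for i
  define D where "D = (\<mu> + a) * (\<mu> + a + 1)"
  define S where "S = (\<Sum>i<n. x i)"
  have G: "simple_graph n E" using g unfolding good_def by blast
  have c1: "\<And>i. i < n \<Longrightarrow> hh n E i = n div r \<or> hh n E i + 1 = n div r" using g unfolding good_def by blast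
  have c2: "(\<Sum>i<n. h i) = KK r n" using g unfolding good_def h_def by blast
  have c3: "\<And>i j. i < n \<Longrightarrow> j < n \<Longrightarrow> i \<noteq> j \<Longrightarrow> \<not> E i j \<Longrightarrow> hh n E i = hh n E j"
    using g unfolding good_def by blast
  have \<mu>0: "\<mu> \<ge> 0" using mu_facts(1)[OF r] unfolding \<mu>_def .
  have Dpos: "D > 0" using mu_facts(2)[OF r n] \<mu>0 unfolding D_def \<mu>_def a_def
    by (intro mult_pos_pos) auto
  have xpos: "x i > 0" for i using xv_facts(1)[OF r] unfolding x_def .
  have xu: "x i * (\<mu> + 1 + h i) = 1" for i using xv_facts(2)[OF r] unfolding x_def \<mu>_def h_def .
  have Zz: "(\<Sum>i<n. (h i - a) * (h i - a + 1) * x i) = 0"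
  proof (rule sum.neutral, rule ballI)
    fix i assume "i \<in> {..<n}"
    hence "hh n E i = n div r \<or> hh n E i + 1 = n div r" using c1 by simp
    hence "(h i - a) * (h i - a + 1) = 0" unfolding h_def a_def by auto
    thus "(h i - a) * (h i - a + 1) * x i = 0" by simp
  qed
  have DS: "S * D = D + (KK r n - (\<Sum>i<n. h i)) + (\<Sum>i<n. (h i - a) * (h i - a + 1) * x i)"
    using calc_DS[OF r, of n E] unfolding S_def D_def x_def h_def \<mu>_def a_def .
  have S1: "S = 1" using DS Zz c2 Dpos by simp
  show ?thesis unfolding graph_spectral_radius_def adj_mat_rmat \<mu>_def[symmetric]
  proof (rule sr_upper[OF rmat_carrier, of _ _ x])
    show "0 \<le> rmat n E $$ (i, j)" if "i < n" "j < n" for i j using that unfolding rmat_def by simp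
    show "0 < x i" for i by (rule xpos)
    show "0 < n" using n by simp
    fix i assume i: "i < n"
    have "(\<Sum>j\<in>nb n E i. x j) = (\<Sum>j\<in>nb n E i. x i)"
    proof (rule sum.cong[OF refl])
      fix j assume "j \<in> nb n E i"
      hence "j < n" "i \<noteq> j" "\<not> E i j" unfolding nb_def by auto
      hence "hh n E i = hh n E j" using c3 i by blast
      thus "x j = x i" unfolding x_def xv_def by simp
    qed
    also have "\<dots> = h i * x i" unfolding h_def hh_def by simp
    finally have nbs: "(\<Sum>j\<in>nb n E i. x j) = h i * x i" .
    have "(\<Sum>j<n. rmat n E $$ (i, j) * x j) = S - x i - h i * x i"
      using row_sum[OF G i, of x] nbs unfolding S_def by simp
    also have "\<dots> = \<mu> * x i" using S1 xu[of i] by (simp add: algebra_simps)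
    finally show "(\<Sum>j<n. rmat n E $$ (i, j) * x j) \<le> \<mu> * x i" by simp
  qed
qed

lemma good_edges: assumes g: "good r n E"
  shows "real (2 * num_edges n E) = real n * (real n - 1) - KK r n"
  using sum_hh[of n E] g unfolding good_def by simp



definition cnt :: "nat \<Rightarrow> nat \<Rightarrow> nat \<Rightarrow> nat" where
  "cnt n r j = card {u. u < n \<and> u mod r = j}"

lemma card_lessSuc: "card {u. u < Suc n \<and> P u} = card {u. u < n \<and> P u} + (if P n then 1 else 0)"
proof (cases "P n")
  case True
  have "{u. u < Suc n \<and> P u} = insert n {u. u < n \<and> P u}" using True by auto
  thus ?thesis using True by simp
next
  case False
  have "{u. u < Suc n \<and> P u} = {u. u < n \<and> P u}" using False less_Suc_eq by auto
  thus ?thesis using False by simp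
qed

lemma cnt_formula: assumes r: "r > 0" and j: "j < r"
  shows "cnt n r j = n div r + (if j < n mod r then 1 else 0)"
proof (induct n)
  case 0 thus ?case unfolding cnt_def by simp
next
  case (Suc n)
  have "cnt (Suc n) r j = cnt n r j + (if n mod r = j then 1 else 0)"
    unfolding cnt_def by (rule card_lessSuc)
  also have "\<dots> = n div r + (if j < n mod r then 1 else 0) + (if n mod r = j then 1 else 0)"
    using Suc by simp
  also have "\<dots> = Suc n div r + (if j < Suc n mod r then 1 else 0)"
    using j r mod_less_divisor[OF r, of n] by (auto simp: mod_Suc div_Suc)
  finally show ?case .
qed

lemma sum_mod_group: assumes r: "r > 0"
  shows "(\<Sum>i<n. f (i mod r)) = (\<Sum>j<r. real (cnt n r j) * f j)"
proof (induct n)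
  case 0 thus ?case unfolding cnt_def by simp
next
  case (Suc n)
  have s1: "(\<Sum>i<Suc n. f (i mod r)) = (\<Sum>i<n. f (i mod r)) + f (n mod r)" by simp
  have s2: "(\<Sum>j<r. real (cnt (Suc n) r j) * f j)
      = (\<Sum>j<r. real (cnt n r j) * f j + (if n mod r = j then f j else 0))"
  proof (rule sum.cong[OF refl])
    fix j
    have "cnt (Suc n) r j = cnt n r j + (if n mod r = j then 1 else 0)"
      unfolding cnt_def by (rule card_lessSuc)
    thus "real (cnt (Suc n) r j) * f j = real (cnt n r j) * f j + (if n mod r = j then f j else 0)"
      by (simp add: distrib_right)
  qed
  have s3: "(\<Sum>j<r. real (cnt n r j) * f j + (if n mod r = j then f j else 0))
      = (\<Sum>j<r. real (cnt n r j) * f j) + (\<Sum>j<r. if n mod r = j then f j else 0)"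
    by (rule sum.distrib)
  have s4: "(\<Sum>j<r. if n mod r = j then f j else 0) = f (n mod r)"
    using mod_less_divisor[OF r, of n] by (subst sum.delta') simp_all
  show ?case unfolding s1 s2 s3 s4 Suc ..
qed

lemma sum_if_less: assumes "b \<le> r"
  shows "(\<Sum>j<r. if j < b then c1 else c2) = real b * c1 + real (r - b) * (c2::real)"
proof -
  have "(\<Sum>j<r. if j < b then c1 else c2) = (\<Sum>j\<in>{..<r} \<inter> {j. j < b}. c1) + (\<Sum>j\<in>{..<r} \<inter> - {j. j < b}. c2)"
    by (rule sum.If_cases) simp
  also have "{..<r} \<inter> {j. j < b} = {..<b}" using assms by auto
  also have "{..<r} \<inter> - {j. j < b} = {b..<r}" by auto
  finally show ?thesis by simp
qed

lemma turan_simple: "simple_graph n (turan r)"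
  unfolding simple_graph_def turan_def by auto

lemma hh_turan: assumes i: "i < n"
  shows "hh n (turan r) i = cnt n r (i mod r) - 1"
proof -
  have "nb n (turan r) i = {u. u < n \<and> u mod r = i mod r} - {i}"
    unfolding nb_def turan_def by auto
  moreover have "i \<in> {u. u < n \<and> u mod r = i mod r}" using i by simp
  ultimately show ?thesis unfolding hh_def cnt_def by (simp add: card_Diff_singleton)
qed

lemma cnt_pos: assumes i: "i < n" shows "cnt n r (i mod r) \<ge> 1"
proof -
  have "i \<in> {u. u < n \<and> u mod r = i mod r}" using i by simp
  hence "{u. u < n \<and> u mod r = i mod r} \<noteq> {}" by blast
  moreover have "finite {u. u < n \<and> u mod r = i mod r}" by simp
  ultimately show ?thesis unfolding cnt_def by (simp add: Suc_le_eq card_gt_0_iff)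
qed

lemma turan_good: assumes r: "r \<ge> 1"
  shows "good r n (turan r)"
proof -
  have r0: "r > 0" using r by simp
  define a where "a = n div r"
  define b where "b = n mod r"
  have br: "b < r" unfolding b_def using r0 by simp
  have c1: "hh n (turan r) i = a \<or> hh n (turan r) i + 1 = a" if i: "i < n" for i
  proof -
    have im: "i mod r < r" using r0 by simp
    have "cnt n r (i mod r) = a + (if i mod r < b then 1 else 0)"
      using cnt_formula[OF r0 im] unfolding a_def b_def .
    thus ?thesis using hh_turan[OF i] cnt_pos[OF i, of r] by (auto split: if_splits)
  qed
  have c3: "hh n (turan r) i = hh n (turan r) j" if "i < n" "j < n" "\<not> turan r i j" for i j
    using that hh_turan[of i n r] hh_turan[of j n r] unfolding turan_def by simp
  have "(\<Sum>i<n. real (hh n (turan r) i)) = (\<Sum>i<n. real (cnt n r (i mod r)) - 1)"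
  proof (rule sum.cong[OF refl])
    fix i assume "i \<in> {..<n}"
    hence i: "i < n" by simp
    show "real (hh n (turan r) i) = real (cnt n r (i mod r)) - 1"
      using hh_turan[OF i] cnt_pos[OF i, of r] by (simp add: of_nat_diff)
  qed
  also have "\<dots> = (\<Sum>j<r. real (cnt n r j) * (real (cnt n r j) - 1))"
    by (rule sum_mod_group[OF r0])
  also have "\<dots> = (\<Sum>j<r. if j < b then (real a + 1) * real a else real a * (real a - 1))"
    by (rule sum.cong[OF refl]) (simp add: cnt_formula[OF r0] a_def b_def)
  also have "\<dots> = KK r n"
    using sum_if_less[of b r] br unfolding KK_def Let_def a_def b_def by (simp add: of_nat_diff)
  finally have c2: "(\<Sum>i<n. real (hh n (turan r) i)) = KK r n" .
  show ?thesis unfolding good_def using turan_simple c1 c2 c3 unfolding a_def by blast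
qed



lemma hh_real: assumes G: "simple_graph n E" and v: "v < n"
  shows "real (hh n E v) = real n - 1 - real (dg n E v)"
proof -
  have "dg n E v + hh n E v = n - 1" by (rule dg_hh[OF G v])
  hence "real (dg n E v) + real (hh n E v) = real (n - 1)" by (metis of_nat_add)
  also have "\<dots> = real n - 1" using v by (simp add: of_nat_diff)
  finally show ?thesis by simp
qed

lemma dg_split: assumes "{u. u < n \<and> E v u} = A \<union> B" "A \<inter> B = {}" "finite A" "finite B"
  shows "dg n E v = card A + card B"
  unfolding dg_def assms(1) using assms(2-4) by (simp add: card_Un_disjoint)

lemma F_to_good: assumes r: "r \<ge> 2" and n: "n \<ge> 2" and F: "family_F r n E"
  shows "good r n E"
proof -
  define a where "a = n div r"
  define b where "b = n mod r"
  have r0: "r > 0" using r by simp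
  have br: "b < r" unfolding b_def using r0 by simp
  have nrel: "real n = real r * real a + real b" unfolding a_def b_def
    by (metis of_nat_add of_nat_mult div_mult_mod_eq mult.commute)
  have G: "simple_graph n E" using F unfolding family_F_def by blast
  have KKe: "KK r n = real b * (real a + 1) * real a + (real r - real b) * real a * (real a - 1)"
    unfolding KK_def Let_def a_def b_def by simp
  show ?thesis
  proof (cases "b = 0")
    case True
    have reg: "induced_regular E {0..<n} ((r - 1) * a)"
      using F True unfolding family_F_def Let_def a_def b_def by simp
    have "n = a * r + b" unfolding a_def b_def by simp
    hence "n = r * a" using True by simp
    hence a1: "a \<ge> 1" using n by (cases a) auto
    have hv: "real (hh n E v) = real a - 1" if v: "v < n" for v
    proof -
      have "dg n E v = (r - 1) * a"
        using reg v unfolding induced_regular_def dg_def by (simp add: atLeast0LessThan lessThan_def)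
      hence "real (dg n E v) = (real r - 1) * real a" using r by (simp add: of_nat_diff)
      thus ?thesis using hh_real[OF G v] nrel True by (simp add: algebra_simps)
    qed
    have c1: "hh n E v + 1 = a" if "v < n" for v using hv[OF that] a1 by linarith
    have "(\<Sum>i<n. real (hh n E i)) = (\<Sum>i<n. real a - 1)"
      by (rule sum.cong[OF refl]) (simp add: hv)
    also have "\<dots> = real n * (real a - 1)" by simp
    also have "\<dots> = KK r n" using KKe nrel True by (simp add: algebra_simps)
    finally have c2: "(\<Sum>i<n. real (hh n E i)) = KK r n" .
    have c3: "hh n E i = hh n E j" if "i < n" "j < n" for i j using c1 that by (metis add_right_cancel)
    show ?thesis unfolding good_def using G c1 c2 c3 unfolding a_def by blast
  next
    case False
    then obtain X Y where XY: "X \<inter> Y = {}" "X \<union> Y = {0..<n}"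
      "card X = b * (a + 1)" "card Y = (r - b) * a" "\<forall>x\<in>X. \<forall>y\<in>Y. E x y"
      "induced_regular E X ((b - 1) * (a + 1))" "induced_regular E Y ((r - b - 1) * a)"
      using F unfolding family_F_def Let_def a_def b_def by auto
    have finX: "finite X" and finY: "finite Y"
      using XY(2) by (metis finite_Un finite_atLeastLessThan)+
    have XYn: "x \<in> X \<Longrightarrow> x < n" "y \<in> Y \<Longrightarrow> y < n" for x y using XY(2) by auto
    have b1: "b \<ge> 1" using False by simp
    have hX: "real (hh n E v) = real a" if v: "v \<in> X" for v
    proof -
      have "{u. u < n \<and> E v u} = {u \<in> X. E v u} \<union> Y"
        using XY(2,5) v by auto
      hence "dg n E v = card {u \<in> X. E v u} + card Y"
        using XY(1) finX finY by (intro dg_split) auto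
      hence eq: "dg n E v = (b - 1) * (a + 1) + (r - b) * a"
        using XY(4,6) v unfolding induced_regular_def by simp
      have bl: "b \<le> r" using br by simp
      have "real (dg n E v) = real ((b - 1) * (a + 1) + (r - b) * a)" by (simp only: eq)
      also have "\<dots> = (real b - 1) * (real a + 1) + (real r - real b) * real a"
        by (simp only: of_nat_add of_nat_mult of_nat_diff[OF b1] of_nat_diff[OF bl] of_nat_1)
      finally have "real (dg n E v) = (real b - 1) * (real a + 1) + (real r - real b) * real a" .
      thus ?thesis using hh_real[OF G XYn(1)[OF v]] nrel by (simp add: algebra_simps)
    qed
    have hY: "real (hh n E v) = real a - 1" and aY: "a \<ge> 1" if v: "v \<in> Y" for v
    proof -
      have "card Y > 0" using v finY by (auto simp: card_gt_0_iff)
      hence a1: "a \<ge> 1" and rb: "r - b \<ge> 1" using XY(4) by (auto simp: Suc_le_eq)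
      thus "a \<ge> 1" by simp
      have "{u. u < n \<and> E v u} = X \<union> {u \<in> Y. E v u}"
      proof (rule equalityI; rule subsetI)
        fix u assume "u \<in> {u. u < n \<and> E v u}" thus "u \<in> X \<union> {u \<in> Y. E v u}" using XY(2) by auto
      next
        fix u assume u: "u \<in> X \<union> {u \<in> Y. E v u}"
        show "u \<in> {u. u < n \<and> E v u}"
        proof (cases "u \<in> X")
          case True
          hence "E u v" using XY(5) v by blast
          hence "E v u" using sg_sym[OF G XYn(1)[OF True] XYn(2)[OF v]] by blast
          thus ?thesis using XYn(1)[OF True] by simp
        next
          case False thus ?thesis using u XYn(2) by auto
        qed
      qed
      hence "dg n E v = card X + card {u \<in> Y. E v u}"
        using XY(1) finX finY by (intro dg_split) auto
      hence eq: "dg n E v = b * (a + 1) + (r - b - 1) * a"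
        using XY(3,7) v unfolding induced_regular_def by simp
      have bl: "b \<le> r" using br by simp
      have "real (dg n E v) = real (b * (a + 1) + (r - b - 1) * a)" by (simp only: eq)
      also have "\<dots> = real b * (real a + 1) + (real r - real b - 1) * real a"
        by (simp only: of_nat_add of_nat_mult of_nat_diff[OF rb] of_nat_diff[OF bl] of_nat_1)
      finally have "real (dg n E v) = real b * (real a + 1) + (real r - real b - 1) * real a" .
      thus "real (hh n E v) = real a - 1" using hh_real[OF G XYn(2)[OF v]] nrel by (simp add: algebra_simps)
    qed
    have c1: "hh n E v = a \<or> hh n E v + 1 = a" if v: "v < n" for v
    proof -
      have "v \<in> X \<or> v \<in> Y" using XY(2) v by auto
      thus ?thesis
      proof
        assume "v \<in> X" thus ?thesis using hX by simp
      next
        assume vY: "v \<in> Y" hence "real (hh n E v) = real a - 1" by (rule hY)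
        thus ?thesis using aY[OF vY] by linarith
      qed
    qed
    have c2: "(\<Sum>i<n. real (hh n E i)) = KK r n"
    proof -
      have "{..<n} = X \<union> Y" using XY(2) by (simp add: atLeast0LessThan)
      hence "(\<Sum>i<n. real (hh n E i)) = (\<Sum>i\<in>X. real (hh n E i)) + (\<Sum>i\<in>Y. real (hh n E i))"
        using XY(1) finX finY by (simp add: sum.union_disjoint)
      also have "\<dots> = (\<Sum>i\<in>X. real a) + (\<Sum>i\<in>Y. real a - 1)"
        using hX hY by simp
      also have "\<dots> = real (card X) * real a + real (card Y) * (real a - 1)" by simp
      also have "\<dots> = KK r n" unfolding KKe XY(3,4) using br by (simp add: of_nat_diff algebra_simps)
      finally show ?thesis .
    qed
    have c3: "hh n E i = hh n E j" if ij: "i < n" "j < n" "i \<noteq> j" "\<not> E i j" for i j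
    proof -
      have i: "i \<in> X \<or> i \<in> Y" and j: "j \<in> X \<or> j \<in> Y" using XY(2) ij by auto
      have "\<not> (i \<in> X \<and> j \<in> Y)" using XY(5) ij by blast
      moreover have "\<not> (i \<in> Y \<and> j \<in> X)"
      proof
        assume "i \<in> Y \<and> j \<in> X"
        hence "E j i" using XY(5) by blast
        hence "E i j" using sg_sym[OF G ij(2) ij(1)] by blast
        thus False using ij by simp
      qed
      ultimately have "(i \<in> X \<and> j \<in> X) \<or> (i \<in> Y \<and> j \<in> Y)" using i j by blast
      hence "real (hh n E i) = real (hh n E j)"
      proof (elim disjE conjE)
        assume "i \<in> X" "j \<in> X" thus ?thesis using hX[of i] hX[of j] by simp
      next
        assume "i \<in> Y" "j \<in> Y" thus ?thesis using hY[of i] hY[of j] by simp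
      qed
      thus ?thesis by (simp only: of_nat_eq_iff)
    qed
    show ?thesis unfolding good_def using G c1 c2 c3 unfolding a_def by blast
  qed
qed



lemma good_to_F: assumes r: "r \<ge> 2" and n: "n \<ge> 2" and g: "good r n E"
  shows "family_F r n E"
proof -
  define a where "a = n div r"
  define b where "b = n mod r"
  have r0: "r > 0" using r by simp
  have br: "b < r" unfolding b_def using r0 by simp
  have bl: "b \<le> r" using br by simp
  have nrel: "real n = real r * real a + real b" unfolding a_def b_def
    by (metis of_nat_add of_nat_mult div_mult_mod_eq mult.commute)
  have KKe: "KK r n = real b * (real a + 1) * real a + (real r - real b) * real a * (real a - 1)"
    unfolding KK_def Let_def a_def b_def by simp
  have G: "simple_graph n E" using g unfolding good_def by blast
  have c1: "\<And>i. i < n \<Longrightarrow> hh n E i = a \<or> hh n E i + 1 = a" using g unfolding good_def a_def by blast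
  have c2: "(\<Sum>i<n. real (hh n E i)) = KK r n" using g unfolding good_def by blast
  have c3: "\<And>i j. i < n \<Longrightarrow> j < n \<Longrightarrow> i \<noteq> j \<Longrightarrow> \<not> E i j \<Longrightarrow> hh n E i = hh n E j"
    using g unfolding good_def by blast
  define X where "X = {i. i < n \<and> hh n E i = a}"
  define Y where "Y = {i. i < n \<and> hh n E i \<noteq> a}"
  have finX: "finite X" and finY: "finite Y" unfolding X_def Y_def by auto
  have disj: "X \<inter> Y = {}" unfolding X_def Y_def by auto
  have un: "X \<union> Y = {0..<n}" unfolding X_def Y_def by auto
  have XYn: "x \<in> X \<Longrightarrow> x < n" "y \<in> Y \<Longrightarrow> y < n" for x y unfolding X_def Y_def by auto
  have hX: "real (hh n E v) = real a" if "v \<in> X" for v using that unfolding X_def by simp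
  have hY1: "hh n E v + 1 = a" if "v \<in> Y" for v using that c1 unfolding Y_def by auto
  have hY: "real (hh n E v) = real a - 1" if "v \<in> Y" for v using hY1[OF that] by linarith
  have cXY: "card X + card Y = n"
  proof -
    have "card (X \<union> Y) = card X + card Y" using disj finX finY by (simp add: card_Un_disjoint)
    thus ?thesis using un by simp
  qed
  have sumeq: "real (card X) * real a + real (card Y) * (real a - 1) = KK r n"
  proof -
    have "{..<n} = X \<union> Y" using un by (simp add: atLeast0LessThan)
    hence "(\<Sum>i<n. real (hh n E i)) = (\<Sum>i\<in>X. real (hh n E i)) + (\<Sum>i\<in>Y. real (hh n E i))"
      using disj finX finY by (simp add: sum.union_disjoint)
    also have "\<dots> = (\<Sum>i\<in>X. real a) + (\<Sum>i\<in>Y. real a - 1)"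
      using hX hY by simp
    also have "\<dots> = real (card X) * real a + real (card Y) * (real a - 1)" by simp
    finally show ?thesis using c2 by simp
  qed
  have cYr: "real (card Y) = real n - real (card X)" using cXY by (metis add_diff_cancel_left' of_nat_add add_diff_cancel_right')
  have "real (card X) * real a + (real n - real (card X)) * (real a - 1) = real (card X) + real n * (real a - 1)"
    by (simp add: algebra_simps)
  moreover have "real (card X) * real a + (real n - real (card X)) * (real a - 1) = KK r n"
    using sumeq unfolding cYr .
  ultimately have "real (card X) = KK r n - real n * (real a - 1)" by linarith
  also have "\<dots> = real b * (real a + 1)" unfolding KKe nrel by (simp add: algebra_simps)
  finally have cXr: "real (card X) = real b * (real a + 1)" .
  hence cX: "card X = b * (a + 1)" by (metis of_nat_eq_iff of_nat_mult of_nat_Suc add.commute Suc_eq_plus1)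
  have cYreal: "real (card Y) = (real r - real b) * real a" using cYr cXr nrel by (simp add: algebra_simps)
  also have "\<dots> = real ((r - b) * a)" by (simp add: of_nat_diff[OF bl])
  finally have cY: "card Y = (r - b) * a" by (simp only: of_nat_eq_iff)
  have comp: "E x y" if "x \<in> X" "y \<in> Y" for x y
  proof (rule ccontr)
    assume ne: "\<not> E x y"
    have "x \<noteq> y" using that disj by auto
    hence "hh n E x = hh n E y" using c3[OF XYn(1)[OF that(1)] XYn(2)[OF that(2)] _ ne] by simp
    thus False using that unfolding X_def Y_def by simp
  qed
  have regX: "card {u \<in> X. E v u} = (b - 1) * (a + 1)" if v: "v \<in> X" and b1: "b \<ge> 1" for v
  proof -
    have "{u. u < n \<and> E v u} = {u \<in> X. E v u} \<union> Y"
      using un comp[OF v] XYn by auto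
    hence "dg n E v = card {u \<in> X. E v u} + card Y"
      using disj finX finY by (intro dg_split) auto
    hence "real (card {u \<in> X. E v u}) = real (dg n E v) - real (card Y)" by simp
    also have "\<dots> = (real b - 1) * (real a + 1)"
      using hh_real[OF G XYn(1)[OF v]] hX[OF v] cYreal nrel by (simp add: algebra_simps)
    also have "\<dots> = real ((b - 1) * (a + 1))" by (simp only: of_nat_mult of_nat_add of_nat_diff[OF b1] of_nat_1)
    finally show ?thesis by (simp only: of_nat_eq_iff)
  qed
  have regY: "card {u \<in> Y. E v u} = (r - b - 1) * a" if v: "v \<in> Y" for v
  proof -
    have "{u. u < n \<and> E v u} = X \<union> {u \<in> Y. E v u}"
    proof (rule equalityI; rule subsetI)
      fix u assume "u \<in> {u. u < n \<and> E v u}" thus "u \<in> X \<union> {u \<in> Y. E v u}" using un by auto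
    next
      fix u assume u: "u \<in> X \<union> {u \<in> Y. E v u}"
      show "u \<in> {u. u < n \<and> E v u}"
      proof (cases "u \<in> X")
        case True
        hence "E u v" using comp v by blast
        hence "E v u" using sg_sym[OF G XYn(1)[OF True] XYn(2)[OF v]] by blast
        thus ?thesis using XYn(1)[OF True] by simp
      next
        case False thus ?thesis using u XYn(2) by auto
      qed
    qed
    hence "dg n E v = card X + card {u \<in> Y. E v u}"
      using disj finX finY by (intro dg_split) auto
    hence "real (card {u \<in> Y. E v u}) = real (dg n E v) - real (card X)" by simp
    also have "\<dots> = (real r - real b - 1) * real a"
      using hh_real[OF G XYn(2)[OF v]] hY[OF v] cXr nrel by (simp add: algebra_simps)
    also have "\<dots> = real ((r - b - 1) * a)"
    proof -
      have rb: "1 \<le> r - b" using br by simp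
      show ?thesis by (simp only: of_nat_mult of_nat_diff[OF rb] of_nat_diff[OF bl] of_nat_1)
    qed
    finally show ?thesis by (simp only: of_nat_eq_iff)
  qed
  show ?thesis
  proof (cases "b = 0")
    case True
    have "card X = 0" using cX True by simp
    hence "X = {}" using finX by simp
    hence Yall: "Y = {0..<n}" using un by simp
    have "induced_regular E {0..<n} ((r - 1) * a)"
      unfolding induced_regular_def
    proof
      fix v assume "v \<in> {0..<n}"
      hence "v \<in> Y" using Yall by simp
      from regY[OF this] show "card {u \<in> {0..<n}. E v u} = (r - 1) * a" using Yall True by simp
    qed
    thus ?thesis unfolding family_F_def Let_def using G True unfolding a_def b_def by simp
  next
    case False
    hence b1: "b \<ge> 1" by simp
    have "X \<inter> Y = {} \<and> X \<union> Y = {0..<n} \<and> card X = b * (a + 1) \<and> card Y = (r - b) * a \<and>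
          (\<forall>x\<in>X. \<forall>y\<in>Y. E x y) \<and> induced_regular E X ((b - 1) * (a + 1)) \<and>
          induced_regular E Y ((r - b - 1) * a)"
      using disj un cX cY comp regX[OF _ b1] regY unfolding induced_regular_def by blast
    thus ?thesis unfolding family_F_def Let_def using G False unfolding a_def b_def by metis
  qed
qed



lemma small_adj: assumes n: "n \<le> 1" and G: "simple_graph n E" and H: "simple_graph n F"
  shows "adj_mat n E = adj_mat n F"
proof (rule eq_matI)
  fix i j assume i: "i < dim_row (adj_mat n F)" and j: "j < dim_col (adj_mat n F)"
  hence "i = 0" "j = 0" "0 < n" using n unfolding adj_mat_def by auto
  thus "adj_mat n E $$ (i, j) = adj_mat n F $$ (i, j)"
    using sg_irr[OF G, of 0] sg_irr[OF H, of 0] unfolding adj_mat_def by simp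
qed (auto simp: adj_mat_def)

lemma small_edges: assumes n: "n \<le> 1" shows "num_edges n E = 0"
proof -
  have e: "{(i, j). i < j \<and> j < n \<and> E i j} = {}" using n by auto
  show ?thesis unfolding num_edges_def e by simp
qed

lemma small_F: assumes n: "n \<le> 1" and r: "r \<ge> 2" and G: "simple_graph n E"
  shows "family_F r n E"
proof (cases "n = 0")
  case True
  thus ?thesis using G unfolding family_F_def Let_def induced_regular_def by simp
next
  case False
  hence n1: "n = 1" using n by simp
  have d: "1 div r = 0" "1 mod r = 1" using r by auto
  have "{u \<in> {0::nat}. E 0 u} = {}" using sg_irr[OF G, of 0] n1 by auto
  hence reg: "induced_regular E {0} 0" unfolding induced_regular_def by simp
  have "\<exists>X Y. X \<inter> Y = {} \<and> X \<union> Y = {0..<1} \<and> card X = 1 * (0 + 1) \<and> card Y = (r - 1) * 0 \<and>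
            (\<forall>x\<in>X. \<forall>y\<in>Y. E x y) \<and> induced_regular E X ((1 - 1) * (0 + 1)) \<and>
            induced_regular E Y ((r - 1 - 1) * 0)"
    by (rule exI[of _ "{0}"], rule exI[of _ "{}"]) (use reg in \<open>auto simp: induced_regular_def\<close>)
  thus ?thesis unfolding family_F_def Let_def n1 d using G n1 by simp
qed

theorem theorem1p7:
  fixes r n :: nat
  assumes "r \<ge> 2"
  shows "(\<forall>E. simple_graph n E \<and> num_edges n E \<ge> num_edges n (turan r) \<longrightarrow>
            graph_spectral_radius n E \<ge> graph_spectral_radius n (turan r))
       \<and> (\<forall>E. simple_graph n E \<and> num_edges n E \<ge> num_edges n (turan r) \<and>
            graph_spectral_radius n E = graph_spectral_radius n (turan r) \<longrightarrow>
            family_F r n E)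
       \<and> (\<forall>E. family_F r n E \<longrightarrow>
            num_edges n E = num_edges n (turan r) \<and>
            graph_spectral_radius n E = graph_spectral_radius n (turan r))"
proof -
  have r1: "r \<ge> 1" using assms by simp
  show ?thesis
  proof (cases "n \<ge> 2")
    case True
    have Tg: "good r n (turan r)" by (rule turan_good[OF r1])
    have hsT: "(\<Sum>i<n. real (hh n (turan r) i)) = KK r n" using Tg unfolding good_def by blast
    have rhoT: "graph_spectral_radius n (turan r) = mu r n"
    proof (rule antisym)
      show "graph_spectral_radius n (turan r) \<le> mu r n" by (rule good_upper[OF r1 True Tg])
      show "mu r n \<le> graph_spectral_radius n (turan r)"
        using main_lower(1)[OF r1 True turan_simple[of n r]] hsT by simp
    qed
    have eT: "real (2 * num_edges n (turan r)) = real n * (real n - 1) - KK r n"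
      by (rule good_edges[OF Tg])
    have hsE: "(\<Sum>i<n. real (hh n E i)) \<le> KK r n"
      if G: "simple_graph n E" and e: "num_edges n E \<ge> num_edges n (turan r)" for E
    proof -
      have "real (2 * num_edges n (turan r)) \<le> real (2 * num_edges n E)" using e by simp
      thus ?thesis using sum_hh[OF G] eT by linarith
    qed
    have P1: "graph_spectral_radius n E \<ge> graph_spectral_radius n (turan r)"
      if "simple_graph n E" "num_edges n E \<ge> num_edges n (turan r)" for E
      using main_lower(1)[OF r1 True that(1) hsE[OF that]] rhoT by simp
    have P2: "family_F r n E"
      if "simple_graph n E" "num_edges n E \<ge> num_edges n (turan r)"
         "graph_spectral_radius n E = graph_spectral_radius n (turan r)" for E
    proof -
      have "good r n E" using main_lower(2)[OF r1 True that(1) hsE[OF that(1,2)]] that(3) rhoT by simp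
      thus ?thesis by (rule good_to_F[OF assms True])
    qed
    have P3: "num_edges n E = num_edges n (turan r) \<and>
            graph_spectral_radius n E = graph_spectral_radius n (turan r)"
      if F: "family_F r n E" for E
    proof -
      have g: "good r n E" by (rule F_to_good[OF assms True F])
      have G: "simple_graph n E" using g unfolding good_def by blast
      have "real (2 * num_edges n E) = real (2 * num_edges n (turan r))"
        using good_edges[OF g] eT by simp
      hence e: "num_edges n E = num_edges n (turan r)" by simp
      have hs: "(\<Sum>i<n. real (hh n E i)) = KK r n" using g unfolding good_def by blast
      have "graph_spectral_radius n E = mu r n"
      proof (rule antisym)
        show "graph_spectral_radius n E \<le> mu r n" by (rule good_upper[OF r1 True g])
        show "mu r n \<le> graph_spectral_radius n E" using main_lower(1)[OF r1 True G] hs by simp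
      qed
      thus ?thesis using e rhoT by simp
    qed
    show ?thesis using P1 P2 P3 by blast
  next
    case False
    hence n1: "n \<le> 1" by simp
    have sameT: "graph_spectral_radius n E = graph_spectral_radius n (turan r)"
      if "simple_graph n E" for E
      unfolding graph_spectral_radius_def using small_adj[OF n1 that turan_simple[of n r]] by simp
    have P3: "num_edges n E = num_edges n (turan r) \<and>
            graph_spectral_radius n E = graph_spectral_radius n (turan r)"
      if F: "family_F r n E" for E
    proof -
      have G: "simple_graph n E" using F unfolding family_F_def by blast
      show ?thesis using sameT[OF G] small_edges[OF n1] by simp
    qed
    show ?thesis using sameT small_F[OF n1 assms] P3 by auto
  qed
qed

end
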